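(* Let $n=2^s$, $q=2^r$ ($s,r$ positive integers). The dual code $C^{\perp}(SL(n,q))$ of the binary code $C(SL(n,q))$ is \[ C^{\perp}(SL(n,q))=\{c(a)=(tr(a\,Tr(g_1)),tr(a\,Tr(g_2)),\dots,tr(a\,Tr(g_N))) : a\in\mathbb{F}_q\}. \]
   Context: $\mathbb{F}_q$ is the field with $q$ elements and $tr:\mathbb{F}_q\to\mathbb{F}_2$ the absolute trace. $N=|SL(n,q)|$, $g_1,\dots,g_N$ is a fixed ordering of $SL(n,q)$, $Tr$ is the matrix trace, $v=(Tr(g_1),\dots,Tr(g_N))\in\mathbb{F}_q^N$, and $C(SL(n,q))=\{u\in\mathbb{F}_2^N: u\cdot v=0\}$ (dot product in $\mathbb{F}_q$); the dual is taken in $\mathbb{F}_2^N$ with respect to the standard inner product. *)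

theory Defs
  imports "HOL-Analysis.Analysis" "HOL-Library.Z2"
begin

definition bit_emb :: "bit \<Rightarrow> 'a::field" where
  "bit_emb b = (if b = 1 then 1 else 0)"

definition abs_tr :: "nat \<Rightarrow> 'a::field \<Rightarrow> bit" where
  "abs_tr r x = (THE b. bit_emb b = (\<Sum>i<r. x ^ (2 ^ i)))"

definition SL :: "('a::field ^'n::finite^'n) set" where
  "SL = {A. det A = 1}"

text \<open>Binary words indexed by the elements of SL(n,q) (i.e. F_2^N): functions vanishing off SL.\<close>
definition words :: "(('a::field ^'n::finite^'n) \<Rightarrow> bit) set" where
  "words = {u. \<forall>g. g \<notin> SL \<longrightarrow> u g = 0}"

text \<open>C(SL(n,q)) = {u in F_2^N : u . v = 0}, dot product computed in F_q, v = (Tr g)_g.\<close>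
definition code_SL :: "(('a::field ^'n::finite^'n) \<Rightarrow> bit) set" where
  "code_SL = {u \<in> words. (\<Sum>g\<in>SL. bit_emb (u g) * trace g) = (0::'a)}"

definition dual_code :: "(('a::field ^'n::finite^'n) \<Rightarrow> bit) set \<Rightarrow> (('a ^'n^'n) \<Rightarrow> bit) set" where
  "dual_code C = {w \<in> words. \<forall>u\<in>C. (\<Sum>g\<in>SL. u g * w g) = 0}"

definition trace_word :: "nat \<Rightarrow> 'a::field \<Rightarrow> (('a ^'n::finite^'n) \<Rightarrow> bit)" where
  "trace_word r a = (\<lambda>g. if g \<in> SL then abs_tr r (a * trace g) else 0)"

end

theory Submission
  imports Defs "HOL-Number_Theory.Residues" "HOL-Computational_Algebra.Polynomial"
    "HOL-Computational_Algebra.Primes"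
begin

lemma UNIV_bit: "(UNIV :: bit set) = {0, 1}" by (auto intro: bit.exhaust)

instance bit :: finite
  by standard (subst UNIV_bit, simp)

lemma bit_add_self [simp]: "(b::bit) + b = 0"
  by (cases b) simp_all

lemma bit_sum0: "(a::bit) + b = 0 \<Longrightarrow> a = b"
  by (cases a; cases b) simp_all

lemma bit_sum3: "(a::bit) + b + c = 0 \<Longrightarrow> c = a + b"
  by (cases a; cases b; cases c) simp_all

lemma two_eq_zero:
  assumes "CARD('a::{field,finite}) = 2 ^ r" "r > 0"
  shows "(2::'a) = 0"
proof -
  have pos: "CHAR('a) > 0" by (rule finite_imp_CHAR_pos) simp
  have pr: "prime CHAR('a)" using prime_CHAR_semidom[OF pos] .
  have "CHAR('a) dvd 2 ^ r" using CHAR_dvd_CARD[where 'a='a] assms(1) by simp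
  then have "CHAR('a) dvd 2" using pr prime_dvd_power by blast
  then have "CHAR('a) = 2" using pr primes_dvd_imp_eq two_is_prime_nat by blast
  then have "of_nat 2 = (0::'a)" using of_nat_CHAR[where 'a='a] by simp
  then show ?thesis by simp
qed

lemma self_add_zero: "(2::'a::field) = 0 \<Longrightarrow> (x::'a) + x = 0"
  by (metis mult_2 mult_zero_left)

lemma neg_self: "(2::'a::field) = 0 \<Longrightarrow> - (x::'a) = x"
  using self_add_zero minus_unique by blast

lemma bit_emb_0 [simp]: "bit_emb 0 = 0" and bit_emb_1 [simp]: "bit_emb 1 = 1"
  by (simp_all add: bit_emb_def)

lemma bit_emb_add:
  assumes "(2::'a::field) = 0"
  shows "bit_emb (x + y) = (bit_emb x + bit_emb y :: 'a)"
  using assms by (cases x; cases y) (simp_all add: one_add_one)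

lemma bit_emb_mult: "bit_emb (x * y) = (bit_emb x * bit_emb y :: 'a::field)"
  by (cases x; cases y) simp_all

lemma bit_emb_inj: "bit_emb x = (bit_emb y :: 'a::field) \<Longrightarrow> x = y"
  by (cases x; cases y) simp_all

lemma bit_emb_sum:
  assumes "(2::'a::field) = 0"
  shows "bit_emb (\<Sum>i\<in>A. f i) = (\<Sum>i\<in>A. bit_emb (f i) :: 'a)"
proof (induction A rule: infinite_finite_induct)
  case (insert x F)
  then show ?case by (simp only: sum.insert[OF insert.hyps(1,2)] bit_emb_add[OF assms] insert.IH)
qed simp_all

definition trT :: "nat \<Rightarrow> 'a::field \<Rightarrow> 'a" where
  "trT r x = (\<Sum>i<r. x ^ (2 ^ i))"

lemma pow2i_add:
  assumes "(2::'a::field) = 0"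
  shows "((x::'a) + y) ^ (2 ^ i) = x ^ (2 ^ i) + y ^ (2 ^ i)"
proof (induction i)
  case 0
  then show ?case by simp
next
  case (Suc i)
  have "(x + y) ^ (2 ^ Suc i) = ((x + y) ^ (2 ^ i)) ^ 2"
    by (simp add: power_mult[symmetric] mult.commute)
  also have "\<dots> = (x ^ (2 ^ i)) ^ 2 + (y ^ (2 ^ i)) ^ 2"
    using Suc assms by (simp add: power2_sum)
  also have "\<dots> = x ^ (2 ^ Suc i) + y ^ (2 ^ Suc i)"
    by (simp add: power_mult[symmetric] mult.commute)
  finally show ?case .
qed

lemma trT_add:
  assumes "(2::'a::field) = 0"
  shows "trT r ((x::'a) + y) = trT r x + trT r y"
  unfolding trT_def by (simp add: pow2i_add[OF assms] sum.distrib)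

lemma trT_0 [simp]: "trT r 0 = 0"
  unfolding trT_def by (simp add: zero_power)

lemma trT_sum:
  assumes "(2::'a::field) = 0"
  shows "trT r (\<Sum>i\<in>A. f i) = (\<Sum>i\<in>A. trT r (f i :: 'a))"
  by (induction A rule: infinite_finite_induct) (simp_all add: trT_add[OF assms])

lemma sq_sum:
  assumes "(2::'a::field) = 0"
  shows "(\<Sum>i\<in>A. f i :: 'a) ^ 2 = (\<Sum>i\<in>A. (f i) ^ 2)"
  by (induction A rule: infinite_finite_induct)
     (simp_all add: power2_sum assms)

lemma pow_card:
  fixes x :: "'a::{field,finite}"
  shows "x ^ card (UNIV :: 'a set) = x"
proof (cases "x = 0")
  case False
  have "x * (\<Prod>y\<in>UNIV-{0}. x * y) = x * x ^ (card (UNIV :: 'a set) - 1) * \<Prod>(UNIV-{0})"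
    by (simp add: prod.distrib mult_ac)
  also have "x * x ^ (card (UNIV :: 'a set) - 1) = x ^ Suc (card (UNIV :: 'a set) - 1)"
    by (subst power_Suc) auto
  also have "Suc (card (UNIV :: 'a set) - 1) = card (UNIV :: 'a set)"
    using finite_UNIV_card_ge_0[where ?'a = 'a] by simp
  also have "(\<Prod>y\<in>UNIV-{0}. x * y) = (\<Prod>y\<in>UNIV-{0}. y)"
    by (rule prod.reindex_bij_witness[of _ "\<lambda>y. y / x" "\<lambda>y. x * y"]) (use False in auto)
  finally show ?thesis
    by simp
qed (use finite_UNIV_card_ge_0[where ?'a = 'a] in auto)

lemma trT_sq:
  assumes "CARD('a::{field,finite}) = 2 ^ r" "r > 0"
  shows "(trT r (x::'a)) ^ 2 = trT r x"
proof -
  have two: "(2::'a) = 0" using two_eq_zero assms by blast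
  have "(trT r x) ^ 2 = (\<Sum>i<r. x ^ (2 ^ Suc i))"
    unfolding trT_def sq_sum[OF two]
    by (simp add: power_mult[symmetric] mult.commute)
  moreover have "(\<Sum>i<Suc r. x ^ (2 ^ i)) = x ^ (2 ^ 0) + (\<Sum>i<r. x ^ (2 ^ Suc i))"
    by (rule sum.lessThan_Suc_shift)
  moreover have "(\<Sum>i<Suc r. x ^ (2 ^ i)) = trT r x + x ^ (2 ^ r)"
    by (simp add: trT_def)
  moreover have "x ^ (2 ^ r) = x" using pow_card[of x] assms by simp
  ultimately show ?thesis by (simp add: add.commute)
qed

lemma trT_01:
  assumes "CARD('a::{field,finite}) = 2 ^ r" "r > 0"
  shows "trT r (x::'a) = 0 \<or> trT r x = 1"
proof -
  let ?y = "trT r x"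
  have "?y * (?y - 1) = 0" using trT_sq[OF assms, of x]
    by (simp add: algebra_simps power2_eq_square)
  then show ?thesis by auto
qed

lemma abs_tr_emb:
  assumes "CARD('a::{field,finite}) = 2 ^ r" "r > 0"
  shows "bit_emb (abs_tr r (x::'a)) = trT r x"
proof -
  have ex: "\<exists>!b. bit_emb b = trT r x"
  proof
    show "bit_emb (if trT r x = 0 then 0 else 1) = trT r x"
      using trT_01[OF assms, of x] by auto
  next
    fix b assume "bit_emb b = trT r x"
    then show "b = (if trT r x = 0 then 0 else 1)"
      using trT_01[OF assms, of x] by (cases b) auto
  qed
  show ?thesis unfolding abs_tr_def
    using theI'[OF ex] by (simp add: trT_def)
qed

lemma abs_tr_add:
  assumes "CARD('a::{field,finite}) = 2 ^ r" "r > 0"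
  shows "abs_tr r ((x::'a) + y) = abs_tr r x + abs_tr r y"
proof (rule bit_emb_inj[where 'a='a])
  have two: "(2::'a) = 0" using two_eq_zero assms by blast
  show "bit_emb (abs_tr r (x + y)) = (bit_emb (abs_tr r x + abs_tr r y) :: 'a)"
    by (subst bit_emb_add[OF two]) (simp add: abs_tr_emb[OF assms] trT_add[OF two])
qed


definition addmaps :: "'b::plus set \<Rightarrow> ('b \<Rightarrow> bit) set" where
  "addmaps H = {f. (\<forall>x\<in>H. \<forall>y\<in>H. f (x + y) = f x + f y) \<and> (\<forall>x. x \<notin> H \<longrightarrow> f x = 0)}"

definition subgrp :: "'b::{plus,zero} set \<Rightarrow> bool" where
  "subgrp H = (0 \<in> H \<and> (\<forall>x\<in>H. \<forall>y\<in>H. x + y \<in> H))"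

lemma addmaps_zero: "card (addmaps {0::'b::{monoid_add,finite}}) \<le> card {0::'b}"
proof -
  have "addmaps {0::'b} \<subseteq> {\<lambda>_. 0}"
  proof
    fix f assume f: "f \<in> addmaps {0::'b}"
    then have "f (0 + 0) = f 0 + f 0" unfolding addmaps_def by blast
    then have "f 0 = 0" by simp
    then have "f y = 0" for y using f unfolding addmaps_def by (cases "y = 0") auto
    then have "f = (\<lambda>_. 0)" by (simp add: fun_eq_iff)
    then show "f \<in> {\<lambda>_. 0}" by simp
  qed
  then have "card (addmaps {0::'b}) \<le> card {\<lambda>_::'b. 0::bit}" by (intro card_mono) auto
  then show ?thesis by simp
qed

lemma addmaps_step:
  fixes H :: "'b::{ab_group_add,finite} set"
  assumes z: "\<And>z::'b. z + z = 0" and sg: "subgrp H" and x: "x \<notin> H"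
  shows "subgrp (H \<union> (+) x ` H)" "card (H \<union> (+) x ` H) = 2 * card H"
    "card (addmaps (H \<union> (+) x ` H)) \<le> 2 * card (addmaps H)"
proof -
  let ?H' = "H \<union> (+) x ` H"
  have neg: "-h = h" for h :: 'b using z minus_unique by blast
  have H0: "0 \<in> H" and Hadd: "\<And>a b. a \<in> H \<Longrightarrow> b \<in> H \<Longrightarrow> a + b \<in> H"
    using sg unfolding subgrp_def by auto
  have mem': "y \<in> ?H' \<longleftrightarrow> y \<in> H \<or> y + x \<in> H" for y
  proof
    assume "y \<in> ?H'"
    then show "y \<in> H \<or> y + x \<in> H"
    proof
      assume "y \<in> (+) x ` H"
      then obtain h where hH: "h \<in> H" and yh: "y = x + h" by auto
      have yx: "y + x = h"
      proof -
        have "y + x = h + (x + x)" using yh by (simp add: algebra_simps)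
        then show ?thesis using z[of x] by simp
      qed
      show ?thesis using yx hH by simp
    qed simp
  next
    assume yy: "y \<in> H \<or> y + x \<in> H"
    have eq: "x + (y + x) = y" using z[of x] by (simp add: algebra_simps)
    show "y \<in> ?H'"
    proof (cases "y \<in> H")
      case True then show ?thesis by simp
    next
      case False
      then have yx: "y + x \<in> H" using yy by blast
      have "x + (y + x) \<in> (+) x ` H" using yx by (rule imageI)
      then show ?thesis unfolding eq by simp
    qed
  qed
  show "subgrp ?H'"
    unfolding subgrp_def
  proof (intro conjI ballI)
    show "0 \<in> ?H'" using H0 by simp
  next
    fix a b assume a: "a \<in> ?H'" and b: "b \<in> ?H'"
    have e1: "a + b + x = (a + x) + b" and e2: "a + b = (a + x) + (b + x)"
      and e3: "a + b + x = a + (b + x)"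
      using z[of x] by (simp_all add: algebra_simps)
    have "a + b \<in> H \<or> a + b + x \<in> H"
    proof (cases "a \<in> H")
      case aH: True
      show ?thesis
      proof (cases "b \<in> H")
        case True then show ?thesis using aH Hadd by blast
      next
        case False
        then have "b + x \<in> H" using b mem' by blast
        then have "a + (b + x) \<in> H" using aH Hadd by blast
        then show ?thesis unfolding e3 by blast
      qed
    next
      case aH: False
      then have ax: "a + x \<in> H" using a mem' by blast
      show ?thesis
      proof (cases "b \<in> H")
        case True
        then have "(a + x) + b \<in> H" using ax Hadd by blast
        then show ?thesis unfolding e1 by blast
      next
        case False
        then have "b + x \<in> H" using b mem' by blast
        then have "(a + x) + (b + x) \<in> H" using ax Hadd by blast
        then show ?thesis unfolding e2 by blast
      qed
    qed
    then show "a + b \<in> ?H'" using mem' by blast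
  qed
  have disj: "H \<inter> (+) x ` H = {}"
  proof (rule ccontr)
    assume "H \<inter> (+) x ` H \<noteq> {}"
    then obtain h where h: "h \<in> H" "x + h \<in> H" by auto
    have e: "(x + h) + h = x" using z[of h] by (simp add: algebra_simps)
    have "(x + h) + h \<in> H" using h Hadd by blast
    then have "x \<in> H" by (simp only: e)
    then show False using x by blast
  qed
  have "card ?H' = card H + card ((+) x ` H)"
    by (rule card_Un_disjoint) (use disj in auto)
  also have "card ((+) x ` H) = card H" by (rule card_image) (simp add: inj_on_def)
  finally show "card ?H' = 2 * card H" by simp
  define E where "E = (\<lambda>(f::'b\<Rightarrow>bit, b::bit). \<lambda>y. if y \<in> H then f y else if y + x \<in> H then f (y + x) + b else 0)"
  have sub: "addmaps ?H' \<subseteq> E ` (addmaps H \<times> UNIV)"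
  proof
    fix g assume g: "g \<in> addmaps ?H'"
    have gadd: "\<And>a b. a \<in> ?H' \<Longrightarrow> b \<in> ?H' \<Longrightarrow> g (a + b) = g a + g b"
      and g0: "\<And>a. a \<notin> ?H' \<Longrightarrow> g a = 0" using g unfolding addmaps_def by auto
    define f where "f = (\<lambda>y. if y \<in> H then g y else 0)"
    have HH: "\<And>a. a \<in> H \<Longrightarrow> a \<in> ?H'" by simp
    have fm: "f \<in> addmaps H" unfolding addmaps_def
    proof (intro CollectI conjI ballI allI impI)
      fix a b assume a: "a \<in> H" and b: "b \<in> H"
      then have "a + b \<in> H" using Hadd by blast
      then show "f (a + b) = f a + f b" unfolding f_def using a b gadd[OF HH[OF a] HH[OF b]] by simp
    next
      fix a assume "a \<notin> H" then show "f a = 0" unfolding f_def by simp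
    qed
    have "x + 0 \<in> (+) x ` H" using H0 by (rule imageI)
    then have xH': "x \<in> ?H'" by simp
    have "g = E (f, g x)"
    proof
      fix y
      show "g y = E (f, g x) y"
      proof (cases "y \<in> H")
        case True then show ?thesis by (simp add: E_def f_def)
      next
        case nH: False
        show ?thesis
        proof (cases "y + x \<in> H")
          case True
          have yx: "y + x \<in> ?H'" using True by simp
          have eqn: "(y + x) + x = y" using z[of x] by (simp add: algebra_simps)
          have "g ((y + x) + x) = g (y + x) + g x" by (rule gadd[OF yx xH'])
          then have "g y = g (y + x) + g x" by (simp only: eqn)
          then show ?thesis using nH True by (simp add: E_def f_def del: add_bit_eq_xor)
        next
          case False
          then have "y \<notin> ?H'" using nH mem' by blast
          then show ?thesis using nH False g0 by (simp add: E_def)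
        qed
      qed
    qed
    then show "g \<in> E ` (addmaps H \<times> UNIV)" using fm by blast
  qed
  have "card (addmaps ?H') \<le> card (E ` (addmaps H \<times> UNIV))"
    by (rule card_mono[OF _ sub]) simp
  also have "\<dots> \<le> card (addmaps H \<times> (UNIV :: bit set))" by (rule card_image_le) simp
  also have "\<dots> = card (addmaps H) * 2" by (simp add: card_cartesian_product UNIV_bit)
  finally show "card (addmaps ?H') \<le> 2 * card (addmaps H)" by simp
qed

lemma addmaps_count:
  assumes z: "\<And>z::'b::{ab_group_add,finite}. z + z = 0"
  shows "card (addmaps (UNIV :: 'b set)) \<le> CARD('b)"
proof -
  have "\<forall>H::'b set. subgrp H \<longrightarrow> card (addmaps H) \<le> card H \<longrightarrow> CARD('b) - card H = k
          \<longrightarrow> card (addmaps (UNIV :: 'b set)) \<le> CARD('b)" for k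
  proof (induction k rule: less_induct)
    case (less k)
    show ?case
    proof (intro allI impI)
      fix H :: "'b set"
      assume sg: "subgrp H" and c: "card (addmaps H) \<le> card H" and k: "CARD('b) - card H = k"
      show "card (addmaps (UNIV :: 'b set)) \<le> CARD('b)"
      proof (cases "H = UNIV")
        case True then show ?thesis using c by simp
      next
        case False
        then obtain x where x: "x \<notin> H" by auto
        note st = addmaps_step[OF z sg x]
        have "0 \<in> H" using sg unfolding subgrp_def by auto
        then have pos: "card H > 0" by (auto simp: card_gt_0_iff)
        have le: "card (H \<union> (+) x ` H) \<le> CARD('b)" by (rule card_mono) auto
        have "CARD('b) - card (H \<union> (+) x ` H) < k" using st(2) pos le k by linarith
        moreover have "card (addmaps (H \<union> (+) x ` H)) \<le> card (H \<union> (+) x ` H)"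
          using st(2,3) c by linarith
        ultimately show ?thesis using less st(1) by blast
      qed
    qed
  qed
  moreover have "subgrp {0::'b}" by (simp add: subgrp_def)
  ultimately show ?thesis using addmaps_zero[where 'b='b] by blast
qed


lemma trT_nonzero_exists:
  assumes card: "CARD('a::{field,finite}) = 2 ^ r" and r: "r > 0"
  shows "\<exists>x::'a. trT r x \<noteq> 0"
proof (rule ccontr)
  assume "\<not> ?thesis"
  then have all: "\<And>x::'a. trT r x = 0" by simp
  define P :: "'a poly" where "P = (\<Sum>i<r. Polynomial.monom 1 (2 ^ i))"
  have polyP: "poly P x = trT r x" for x by (simp add: P_def poly_sum poly_monom trT_def)
  have "Polynomial.coeff P (2 ^ (r - 1)) = (\<Sum>i<r. if i = r - 1 then 1 else 0)"
    unfolding P_def coeff_sum by (intro sum.cong refl) simp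
  also have "\<dots> = 1" using r by simp
  finally have P0: "P \<noteq> 0" by auto
  have deg: "degree P \<le> 2 ^ (r - 1)" unfolding P_def
  proof (rule degree_sum_le)
    fix i assume "i \<in> {..<r}"
    then have "2 ^ i \<le> (2::nat) ^ (r - 1)" by (intro power_increasing) auto
    then show "degree (Polynomial.monom (1::'a) (2 ^ i)) \<le> 2 ^ (r - 1)"
      using degree_monom_le order.trans by blast
  qed simp
  have c: "card {x::'a. poly P x = 0} \<le> degree P" by (rule card_poly_roots_bound) fact
  have u: "{x. poly P x = 0} = UNIV" using all polyP by auto
  from c u have "CARD('a) \<le> degree P" by simp
  then have "CARD('a) \<le> 2 ^ (r - 1)" using deg by (rule order.trans)
  moreover have "(2::nat) ^ (r - 1) < 2 ^ r" using r by (intro power_strict_increasing) auto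
  ultimately show False using card by linarith
qed

lemma trace_functionals:
  assumes card: "CARD('a::{field,finite}) = 2 ^ r" and r: "r > 0"
    and f: "f \<in> addmaps (UNIV :: 'a set)"
  shows "\<exists>a. f = (\<lambda>t. abs_tr r (a * t))"
proof -
  have two: "(2::'a) = 0" using two_eq_zero card r by blast
  define \<Phi> where "\<Phi> = (\<lambda>a::'a. \<lambda>t. abs_tr r (a * t))"
  have sub: "range \<Phi> \<subseteq> addmaps UNIV"
    unfolding \<Phi>_def addmaps_def by (auto simp: distrib_left abs_tr_add[OF card r])
  have inj: "inj \<Phi>"
  proof (rule injI)
    fix a b assume eq: "\<Phi> a = \<Phi> b"
    show "a = b"
    proof (rule ccontr)
      assume ne: "a \<noteq> b"
      obtain x0 :: 'a where x0: "trT r x0 \<noteq> 0" using trT_nonzero_exists[OF card r] by blast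
      define t where "t = x0 / (a - b)"
      have "abs_tr r (a * t) = abs_tr r (b * t)" using fun_cong[OF eq, of t] unfolding \<Phi>_def by simp
      then have e: "trT r (a * t) = trT r (b * t)" using abs_tr_emb[OF card r] by metis
      have "(a - b) * t = x0" using ne by (simp add: t_def)
      moreover have "(a - b) * t = a * t + (- (b * t))" by (simp add: algebra_simps)
      ultimately have "x0 = a * t + b * t" using neg_self[OF two, of "b * t"] by simp
      then have "trT r x0 = trT r (a * t) + trT r (b * t)" using trT_add[OF two] by simp
      also have "\<dots> = 0" using e self_add_zero[OF two] by simp
      finally show False using x0 by simp
    qed
  qed
  have c1: "card (range \<Phi>) = CARD('a)" using inj by (simp add: card_image)
  have c2: "card (addmaps (UNIV::'a set)) \<le> CARD('a)"
    by (rule addmaps_count) (rule self_add_zero[OF two])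
  have fin: "finite (addmaps (UNIV::'a set))" by simp
  have "card (range \<Phi>) \<le> card (addmaps (UNIV::'a set))" by (rule card_mono[OF fin sub])
  then have "range \<Phi> = addmaps UNIV" using c1 c2 by (intro card_subset_eq[OF fin sub]) simp
  then show ?thesis using f unfolding \<Phi>_def by auto
qed

lemma SL_trace_surj:
  assumes n: "CARD('n::finite) = 2 ^ s" and s: "s > 0" and two: "(2::'a::field) = 0"
  shows "\<exists>g::'a^'n^'n. g \<in> SL \<and> trace g = t"
proof -
  obtain i0 :: 'n where True by blast
  have "\<exists>j0. j0 \<noteq> i0"
  proof (rule ccontr)
    assume "\<not> ?thesis"
    then have u: "UNIV = {i0}" by auto
    have "CARD('n) = card {i0}" by (subst u) (rule refl)
    then have "CARD('n) = 1" by simp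
    moreover have "(2::nat) ^ s \<ge> 2" using s by (cases s) auto
    ultimately show False using n by simp
  qed
  then obtain j0 where ij: "j0 \<noteq> i0" by blast
  define I where "I = (mat 1 :: 'a^'n^'n)"
  define U where "U = (\<chi> k. if k = i0 then row i0 I + t *s row j0 I else row k I)"
  define g where "g = (\<chi> k. if k = j0 then row j0 U + 1 *s row i0 U else row k U)"
  have dU: "det U = det I" unfolding U_def by (rule det_row_operation) (use ij in auto)
  have dg: "det g = det U" unfolding g_def by (rule det_row_operation) (use ij in auto)
  have gSL: "g \<in> SL" unfolding SL_def using dU dg by (simp add: I_def)
  have Uent: "U $ k $ j = (if k = i0 then (if i0 = j then 1 else 0) + (if j0 = j then t else 0)
       else (if k = j then 1 else 0))" for k j
    by (simp add: U_def I_def row_def mat_def)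
  have gdiag: "g $ k $ k = (if k = j0 then t else 0) + 1" for k
    using ij by (simp add: g_def row_def Uent)
  have "trace g = (\<Sum>k\<in>UNIV. (if k = j0 then t else 0)) + of_nat CARD('n)"
    by (simp add: trace_def gdiag sum.distrib)
  also have "\<dots> = t" using n s two by (simp add: of_nat_power zero_power)
  finally show ?thesis using gSL by blast
qed

lemma sum_restrict_sub:
  "finite A \<Longrightarrow> D \<subseteq> A \<Longrightarrow> (\<Sum>g\<in>A. if g \<in> D then h g else 0) = (\<Sum>g\<in>D. h g)"
  by (simp add: sum.inter_restrict[symmetric] Int_absorb1)

theorem proposition4:
  fixes s r :: nat
  assumes "s > 0" and "r > 0"
    and "CARD('n::finite) = 2 ^ s"
    and "CARD('a::{field,finite}) = 2 ^ r"
  shows "(dual_code (code_SL :: (('a ^'n^'n) \<Rightarrow> bit) set))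
           = {trace_word r a | a :: 'a. True}"
proof -
  have two: "(2::'a) = 0" using two_eq_zero assms(4,2) by blast
  have finSL: "finite (SL :: ('a^'n^'n) set)" by simp
  have key: "(\<Sum>g\<in>D. w g) = 0"
    if w: "w \<in> dual_code (code_SL :: (('a ^'n^'n) \<Rightarrow> bit) set)" and D: "D \<subseteq> SL"
      and tr: "(\<Sum>g\<in>D. trace g) = (0::'a)" for w :: "'a^'n^'n \<Rightarrow> bit" and D
  proof -
    define u where "u = (\<lambda>g::'a^'n^'n. if g \<in> D then (1::bit) else 0)"
    have uw: "u \<in> words" unfolding words_def u_def using D by auto
    have "(\<Sum>g\<in>SL. bit_emb (u g) * trace g) = (\<Sum>g\<in>SL. if g \<in> D then trace g else (0::'a))"
      by (rule sum.cong) (simp_all add: u_def)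
    also have "\<dots> = 0" using sum_restrict_sub[OF finSL D, of trace] tr by simp
    finally have "u \<in> code_SL" using uw unfolding code_SL_def by simp
    then have "(\<Sum>g\<in>SL. u g * w g) = 0" using w unfolding dual_code_def by blast
    moreover have "(\<Sum>g\<in>SL. u g * w g) = (\<Sum>g\<in>SL. if g \<in> D then w g else 0)"
      by (rule sum.cong) (simp_all add: u_def)
    ultimately show ?thesis using sum_restrict_sub[OF finSL D, of w] by simp
  qed
  show ?thesis
  proof (rule equalityI)
    show "dual_code (code_SL :: (('a ^'n^'n) \<Rightarrow> bit) set) \<subseteq> {trace_word r a | a :: 'a. True}"
    proof
      fix w assume w: "w \<in> dual_code (code_SL :: (('a ^'n^'n) \<Rightarrow> bit) set)"
      have wz: "w g = 0" if "g \<notin> SL" for g using w that unfolding dual_code_def words_def by blast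
      have ex: "\<exists>g::'a^'n^'n. g \<in> SL \<and> trace g = t" for t
        using SL_trace_surj[OF assms(3) assms(1) two] by blast
      define h where "h t = (SOME g::'a^'n^'n. g \<in> SL \<and> trace g = t)" for t
      have hSL: "h t \<in> SL" and htr: "trace (h t) = t" for t
        using someI_ex[OF ex[of t]] unfolding h_def by auto
      define f where "f t = w (h t)" for t
      have wf: "w g = f (trace g)" if g: "g \<in> SL" for g
      proof (cases "g = h (trace g)")
        case True
        show ?thesis unfolding f_def by (rule arg_cong[where f=w]) (rule True)
      next
        case False
        have "(\<Sum>x\<in>{g, h (trace g)}. w x) = 0"
          by (rule key[OF w]) (use g hSL False htr self_add_zero[OF two] in auto)
        then have "w g + w (h (trace g)) = 0" using False by simp
        then show ?thesis unfolding f_def by (rule bit_sum0)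
      qed
      have f0: "f 0 = 0"
      proof -
        have "(\<Sum>x\<in>{h 0}. w x) = 0" by (rule key[OF w]) (use hSL htr in auto)
        then show ?thesis unfolding f_def by simp
      qed
      have fadd: "f (x + y) = f x + f y" for x y
      proof (cases "x = 0 \<or> y = 0 \<or> x = y")
        case True
        then show ?thesis using f0 two by auto
      next
        case False
        then have nz: "x \<noteq> 0" "y \<noteq> 0" "x \<noteq> y" by auto
        have d1: "x + y \<noteq> x" and d2: "x + y \<noteq> y" using nz by auto
        have hd: "h x \<noteq> h y" "h x \<noteq> h (x + y)" "h y \<noteq> h (x + y)"
          using nz d1 d2 htr by metis+
        have "(\<Sum>z\<in>{h x, h y, h (x + y)}. w z) = 0"
        proof (rule key[OF w])
          show "{h x, h y, h (x + y)} \<subseteq> SL" using hSL by auto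
          have "(\<Sum>z\<in>{h x, h y, h (x + y)}. trace z) = x + y + (x + y)"
            using hd htr by (simp add: add.assoc)
          then show "(\<Sum>z\<in>{h x, h y, h (x + y)}. trace z) = 0"
            using self_add_zero[OF two] by simp
        qed
        then have "w (h x) + (w (h y) + w (h (x + y))) = 0" using hd
          by (simp del: add_bit_eq_xor)
        then have "w (h x) + w (h y) + w (h (x + y)) = 0" by (simp only: add.assoc)
        then show ?thesis unfolding f_def by (rule bit_sum3)
      qed
      have "f \<in> addmaps (UNIV :: 'a set)" unfolding addmaps_def using fadd by simp
      then obtain a where fa: "f = (\<lambda>t. abs_tr r (a * t))"
        using trace_functionals[OF assms(4) assms(2)] by blast
      have "w = trace_word r a"
      proof
        fix g show "w g = trace_word r a g"
          by (cases "g \<in> SL") (simp_all add: trace_word_def wf fa wz)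
      qed
      then show "w \<in> {trace_word r a | a :: 'a. True}" by blast
    qed
  next
    show "{trace_word r a | a :: 'a. True} \<subseteq> dual_code (code_SL :: (('a ^'n^'n) \<Rightarrow> bit) set)"
    proof
      fix w :: "'a^'n^'n \<Rightarrow> bit"
      assume "w \<in> {trace_word r a | a :: 'a. True}"
      then obtain a :: 'a where wa: "w = trace_word r a" by blast
      have "w \<in> words" unfolding wa words_def trace_word_def by simp
      moreover have "(\<Sum>g\<in>SL. u g * w g) = 0" if u: "u \<in> (code_SL :: (('a ^'n^'n) \<Rightarrow> bit) set)" for u
      proof (rule bit_emb_inj[where 'a='a])
        have cu: "(\<Sum>g\<in>SL. bit_emb (u g) * trace g) = (0::'a)" using u unfolding code_SL_def by blast
        have tm: "bit_emb (u g * w g) = trT r (a * (bit_emb (u g) * trace g))" if "g \<in> SL" for g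
          using that by (cases "u g") (simp_all add: wa trace_word_def abs_tr_emb[OF assms(4,2)] del: mult_bit_eq_and)
        have "bit_emb (\<Sum>g\<in>SL. u g * w g) = (\<Sum>g\<in>SL. trT r (a * (bit_emb (u g) * trace g)))"
          unfolding bit_emb_sum[OF two] by (rule sum.cong[OF refl tm])
        also have "\<dots> = trT r (a * (\<Sum>g\<in>SL. bit_emb (u g) * trace g))"
          by (simp add: trT_sum[OF two] sum_distrib_left)
        also have "\<dots> = 0" using cu by simp
        finally show "bit_emb (\<Sum>g\<in>SL. u g * w g) = (bit_emb 0 :: 'a)" by simp
      qed
      ultimately show "w \<in> dual_code (code_SL :: (('a ^'n^'n) \<Rightarrow> bit) set)"
        unfolding dual_code_def by blast
    qed
  qed
qed

end
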